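(* Let $R = \mathbb{Z} \times \mathbb{Z}$ with coordinatewise addition and multiplication $(a,b)\cdot(c,d) = (ac, ad+bc)$, and consider the template $(\mathbb{Z}^+ \times \mathbb{N}, \mathbb{N}^2, \mathbb{N}^2)$ in $R$. Suppose $a_1, a_2 \in \mathbb{Z}^+$ are coprime, $b \in \mathbb{N}$, $\alpha_1 = (a_1, 0)$ and $\alpha_2 = (a_2, b)$. Then \[ \mathrm{Frob}(\alpha_1, \alpha_2) = \left(\chi(a_1,a_2),\ \chi(a_1,a_2) + b(a_1 - 1)\right) + \mathbb{N}^2. \]
   Context: $\mathbb{N}$ denotes the nonnegative integers, $\mathbb{Z}^+ = \mathbb{N}\setminus\{0\}$. For coprime positive integers $a_1,a_2$, $\chi(a_1,a_2)$ denotes the least $w \in \mathbb{N}$ such that $w + \mathbb{N} \subseteq \{\lambda_1 a_1 + \lambda_2 a_2 : \lambda_1,\lambda_2 \in \mathbb{N}\}$; it equals $(a_1-1)(a_2-1)$. For the template above, $MN(\alpha_1, \alpha_2) = \{\alpha_1\lambda_1 + \alpha_2\lambda_2 : \lambda_1,\lambda_2 \in \mathbb{N}^2\} = \{(a_1c_1 + a_2c_2,\ a_1d_1 + a_2d_2 + bc_2) : c_1,c_2,d_1,d_2 \in \mathbb{N}\}$, and $\mathrm{Frob}(\alpha_1, \alpha_2) = \{w \in R : w + \mathbb{N}^2 \subseteq MN(\alpha_1, \alpha_2)\}$. *)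

theory Defs
  imports Main
begin

definition Rmult :: "int \<times> int \<Rightarrow> int \<times> int \<Rightarrow> int \<times> int" where
  "Rmult x y = (fst x * fst y, fst x * snd y + snd x * fst y)"

definition Radd :: "int \<times> int \<Rightarrow> int \<times> int \<Rightarrow> int \<times> int" where
  "Radd x y = (fst x + fst y, snd x + snd y)"

definition Nsq :: "(int \<times> int) set" where
  "Nsq = {(c, d). c \<ge> 0 \<and> d \<ge> 0}"

definition MN :: "int \<times> int \<Rightarrow> int \<times> int \<Rightarrow> (int \<times> int) set" where
  "MN \<alpha>1 \<alpha>2 = {Radd (Rmult \<alpha>1 m1) (Rmult \<alpha>2 m2) | m1 m2. m1 \<in> Nsq \<and> m2 \<in> Nsq}"

definition Frob :: "int \<times> int \<Rightarrow> int \<times> int \<Rightarrow> (int \<times> int) set" where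
  "Frob \<alpha>1 \<alpha>2 = {w. (\<lambda>v. Radd w v) ` Nsq \<subseteq> MN \<alpha>1 \<alpha>2}"

definition chi :: "nat \<Rightarrow> nat \<Rightarrow> nat" where
  "chi a1 a2 = (LEAST w. \<forall>n. \<exists>l1 l2. w + n = l1 * a1 + l2 * a2)"

end

theory Submission
  imports Defs
begin

lemma MN_iff:
  "((x,y) \<in> MN (int a1, 0) (int a2, int b)) \<longleftrightarrow>
   (\<exists>c1 c2 d1 d2::nat. x = int (c1*a1 + c2*a2) \<and> y = int (d1*a1 + d2*a2 + b*c2))"
proof
  assume "(x,y) \<in> MN (int a1, 0) (int a2, int b)"
  then obtain m1 m2 where m: "m1 \<in> Nsq" "m2 \<in> Nsq"
    "(x,y) = Radd (Rmult (int a1, 0) m1) (Rmult (int a2, int b) m2)"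
    unfolding MN_def by blast
  obtain c1 d1 c2 d2 where e: "m1 = (c1,d1)" "m2 = (c2,d2)" by fastforce
  have p: "c1 \<ge> 0" "d1 \<ge> 0" "c2 \<ge> 0" "d2 \<ge> 0" using m(1,2) e by (auto simp: Nsq_def)
  have xy: "x = int a1 * c1 + int a2 * c2" "y = int a1 * d1 + int a2 * d2 + int b * c2"
    using m(3) e by (auto simp: Radd_def Rmult_def)
  show "\<exists>c1 c2 d1 d2::nat. x = int (c1*a1 + c2*a2) \<and> y = int (d1*a1 + d2*a2 + b*c2)"
    apply (rule exI[of _ "nat c1"], rule exI[of _ "nat c2"], rule exI[of _ "nat d1"], rule exI[of _ "nat d2"])
    using p xy by (simp add: algebra_simps)
next
  assume "\<exists>c1 c2 d1 d2::nat. x = int (c1*a1 + c2*a2) \<and> y = int (d1*a1 + d2*a2 + b*c2)"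
  then obtain c1 c2 d1 d2 :: nat where xy: "x = int (c1*a1 + c2*a2)" "y = int (d1*a1 + d2*a2 + b*c2)"
    by blast
  have "(x,y) = Radd (Rmult (int a1, 0) (int c1, int d1)) (Rmult (int a2, int b) (int c2, int d2))"
    using xy by (simp add: Radd_def Rmult_def algebra_simps)
  moreover have "(int c1, int d1) \<in> Nsq" "(int c2, int d2) \<in> Nsq" by (auto simp: Nsq_def)
  ultimately show "(x,y) \<in> MN (int a1, 0) (int a2, int b)" unfolding MN_def by blast
qed

definition rep :: "nat \<Rightarrow> nat \<Rightarrow> nat \<Rightarrow> bool" where
  "rep a1 a2 n = (\<exists>l1 l2. n = l1 * a1 + l2 * a2)"

lemma chi_exists:
  fixes a1 a2 :: nat
  assumes "a1 > 0" "a2 > 0" "coprime a1 a2"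
  shows "\<exists>w. \<forall>n. \<exists>l1 l2. w + n = l1 * a1 + l2 * a2"
proof -
  obtain s t where st: "a1 * s = a2 * t + gcd a1 a2" using bezout_nat[of a1 a2] assms by auto
  hence st: "a1 * s = a2 * t + 1" using assms by simp
  have "\<exists>l1 l2. a2*a2*t + n = l1 * a1 + l2 * a2" for n
  proof -
    define m where "m = a2*a2*t + n"
    define q where "q = m div a2"
    define r where "r = m mod a2"
    have m: "m = q*a2 + r" by (simp add: q_def r_def)
    have "r < a2" using assms by (simp add: r_def)
    hence "q \<ge> a2 * t" unfolding q_def m_def using assms
      by (metis add.commute div_le_mono le_add2 mult.assoc mult.commute nonzero_mult_div_cancel_left not_gr0)
    hence "q \<ge> r * t" using \<open>r < a2\<close> by (meson dual_order.trans less_or_eq_imp_le mult_le_mono1)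
    have rs: "r*s*a1 = r*t*a2 + r" using st by (metis add.commute mult.assoc mult.commute mult.right_neutral distrib_left)
    have "(q - r*t)*a2 = q*a2 - r*t*a2" by (simp add: diff_mult_distrib)
    moreover have "r*t*a2 \<le> q*a2" using \<open>q \<ge> r*t\<close> by simp
    ultimately have "m = (r*s)*a1 + (q - r*t)*a2" using m rs by simp
    thus ?thesis unfolding m_def by blast
  qed
  thus ?thesis by blast
qed


lemma chi_prop:
  assumes "a1 > 0" "a2 > 0" "coprime a1 a2"
  shows "rep a1 a2 (chi a1 a2 + n)"
proof -
  have "\<forall>n. \<exists>l1 l2. chi a1 a2 + n = l1 * a1 + l2 * a2"
    unfolding chi_def by (rule LeastI_ex, rule chi_exists[OF assms])
  thus ?thesis unfolding rep_def by blast
qed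

lemma chi_le:
  assumes "\<And>n. rep a1 a2 (w + n)"
  shows "chi a1 a2 \<le> w"
  unfolding chi_def by (rule Least_le) (use assms in \<open>auto simp: rep_def\<close>)

lemma chi_min:
  assumes "a1 > 0" "a2 > 0" "coprime a1 a2" "chi a1 a2 > 0"
  shows "\<not> rep a1 a2 (chi a1 a2 - 1)"
proof
  assume r: "rep a1 a2 (chi a1 a2 - 1)"
  have "chi a1 a2 \<le> chi a1 a2 - 1"
  proof (rule chi_le)
    fix n
    show "rep a1 a2 (chi a1 a2 - 1 + n)"
    proof (cases n)
      case 0 thus ?thesis using r by simp
    next
      case (Suc k)
      thus ?thesis using chi_prop[OF assms(1-3), of k] assms(4) by simp
    qed
  qed
  thus False using assms by simp
qed


lemma rep_reduce:
  assumes "a1 > 0" "rep a1 a2 x"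
  shows "\<exists>c1 c2. x = c1*a1 + c2*a2 \<and> c2 < a1"
proof -
  obtain l1 l2 where x: "x = l1*a1 + l2*a2" using assms by (auto simp: rep_def)
  define q where "q = l2 div a1"
  define r where "r = l2 mod a1"
  have l2: "l2 = q*a1 + r" unfolding q_def r_def by simp
  have "x = (l1 + a2*q)*a1 + r*a2" unfolding x l2 by (simp add: algebra_simps)
  moreover have "r < a1" using assms unfolding r_def by simp
  ultimately show ?thesis by blast
qed

lemma forced:
  fixes a1 a2 c1 c2 u :: nat
  assumes "a1 > 0" "coprime a1 a2" "c1*a1 + c2*a2 = a2*(a1-1) + a1*u"
  shows "\<exists>j. c2 = (a1-1) + a1*j"
proof -
  have e: "a2*(a1-1) + a2 = a1*a2" using assms(1) by (cases a1) simp_all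
  have "c1*a1 + (c2+1)*a2 = (c1*a1 + c2*a2) + a2" by (simp add: algebra_simps)
  also have "\<dots> = a1*(a2+u)" using assms(3) e by (simp add: algebra_simps)
  finally have "c1*a1 + (c2+1)*a2 = a1*(a2+u)" .
  hence "a1 dvd c1*a1 + (c2+1)*a2" by simp
  hence "a1 dvd (c2+1)*a2" by (simp add: dvd_add_right_iff)
  hence "a1 dvd c2+1" using assms(2) coprime_dvd_mult_left_iff by blast
  then obtain k where k: "c2 + 1 = a1*k" by blast
  then obtain k' where k': "k = Suc k'" by (cases k) auto
  have "c2 = (a1-1) + a1*k'" using k k' assms(1) by (cases a1) simp_all
  thus ?thesis by blast
qed

lemma img_iff:
  "w \<in> (\<lambda>v. Radd K v) ` Nsq \<longleftrightarrow> fst w \<ge> fst K \<and> snd w \<ge> snd K"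
proof
  assume "w \<in> (\<lambda>v. Radd K v) ` Nsq" thus "fst w \<ge> fst K \<and> snd w \<ge> snd K"
    by (auto simp: Nsq_def Radd_def)
next
  assume a: "fst w \<ge> fst K \<and> snd w \<ge> snd K"
  have "w = Radd K (fst w - fst K, snd w - snd K)" by (simp add: Radd_def)
  moreover have "(fst w - fst K, snd w - snd K) \<in> Nsq" using a by (simp add: Nsq_def)
  ultimately show "w \<in> (\<lambda>v. Radd K v) ` Nsq" by blast
qed

lemma Frob_iff:
  "w \<in> Frob A B \<longleftrightarrow> (\<forall>p q. p \<ge> 0 \<longrightarrow> q \<ge> 0 \<longrightarrow> (fst w + p, snd w + q) \<in> MN A B)"
proof
  assume "w \<in> Frob A B"
  hence h: "(\<lambda>v. Radd w v) ` Nsq \<subseteq> MN A B" by (simp add: Frob_def)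
  show "\<forall>p q. p \<ge> 0 \<longrightarrow> q \<ge> 0 \<longrightarrow> (fst w + p, snd w + q) \<in> MN A B"
  proof (intro allI impI)
    fix p q :: int assume "p \<ge> 0" "q \<ge> 0"
    hence "(p,q) \<in> Nsq" by (simp add: Nsq_def)
    hence "Radd w (p,q) \<in> MN A B" using h by blast
    thus "(fst w + p, snd w + q) \<in> MN A B" by (simp add: Radd_def)
  qed
next
  assume h: "\<forall>p q. p \<ge> 0 \<longrightarrow> q \<ge> 0 \<longrightarrow> (fst w + p, snd w + q) \<in> MN A B"
  have "Radd w v \<in> MN A B" if "v \<in> Nsq" for v
    using that h by (cases v) (simp add: Nsq_def Radd_def)
  thus "w \<in> Frob A B" by (auto simp: Frob_def)
qed

theorem proposition4p5:
  fixes a1 a2 b :: nat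
  assumes "a1 > 0" and "a2 > 0" and "coprime a1 a2"
  shows "Frob (int a1, 0) (int a2, int b)
    = (\<lambda>v. Radd (int (chi a1 a2), int (chi a1 a2) + int b * (int a1 - 1)) v) ` Nsq"
proof -
  define C where "C = chi a1 a2"
  define B where "B = b * (a1 - 1)"
  have B: "int B = int b * (int a1 - 1)" using assms(1) by (simp add: B_def of_nat_diff)
  have main: "w \<in> Frob (int a1, 0) (int a2, int b) \<longleftrightarrow> fst w \<ge> int C \<and> snd w \<ge> int C + int B" for w
  proof
    assume w: "w \<in> Frob (int a1, 0) (int a2, int b)"
    obtain u v where uv: "w = (u,v)" by fastforce
    have M: "\<And>p q. p \<ge> 0 \<Longrightarrow> q \<ge> 0 \<Longrightarrow> (u + p, v + q) \<in> MN (int a1, 0) (int a2, int b)"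
      using w uv Frob_iff by auto
    from M[of 0 0] have "u \<ge> 0" "v \<ge> 0" by (auto simp: MN_iff)
    have "rep a1 a2 (nat u + n)" for n
    proof -
      from M[of "int n" 0] obtain c1 c2 d1 d2 :: nat where "u + int n = int (c1*a1 + c2*a2)"
        by (auto simp: MN_iff)
      hence "nat u + n = c1*a1 + c2*a2" using \<open>u \<ge> 0\<close> by linarith
      thus ?thesis by (auto simp: rep_def)
    qed
    hence Cu: "C \<le> nat u" unfolding C_def by (rule chi_le)
    have "v \<ge> int C + int B"
    proof (rule ccontr)
      assume "\<not> v \<ge> int C + int B"
      hence lt: "v < int C + int B" by simp
      define x where "x = a2*(a1-1) + a1 * nat u"
      have "a1 * nat u \<ge> nat u" using assms(1) by simp
      hence "x \<ge> nat u" unfolding x_def by linarith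
      hence xu: "u + (int x - u) = int x" "int x - u \<ge> 0" using \<open>u \<ge> 0\<close> by auto
      show False
      proof (cases "C = 0")
        case True
        have "(u + (int x - u), v + 0) \<in> MN (int a1, 0) (int a2, int b)"
          using M xu(2) by blast
        hence "(int x, v) \<in> MN (int a1, 0) (int a2, int b)" using xu(1) by simp
        then obtain c1 c2 d1 d2 :: nat where
          e: "int x = int (c1*a1 + c2*a2)" "v = int (d1*a1 + d2*a2 + b*c2)"
          unfolding MN_iff by blast
        from e(1) have "x = c1*a1 + c2*a2" by (simp only: of_nat_eq_iff)
        hence "c1*a1 + c2*a2 = a2*(a1-1) + a1*(nat u)" unfolding x_def by simp
        from forced[OF assms(1,3) this] obtain j where "c2 = (a1-1) + a1*j" by blast
        hence "b*c2 \<ge> B" unfolding B_def by simp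
        hence "d1*a1 + d2*a2 + b*c2 \<ge> B" by linarith
        hence "v \<ge> int B" using e(2) by linarith
        thus False using lt True by simp
      next
        case False
        define y where "y = C - 1 + B"
        have yv: "int y = int C - 1 + int B" using False unfolding y_def by simp
        hence yv2: "v + (int y - v) = int y" "int y - v \<ge> 0" using lt by auto
        have "(u + (int x - u), v + (int y - v)) \<in> MN (int a1, 0) (int a2, int b)"
          using M xu(2) yv2(2) by blast
        hence "(int x, int y) \<in> MN (int a1, 0) (int a2, int b)" using xu(1) yv2(1) by simp
        then obtain c1 c2 d1 d2 :: nat where
          e: "int x = int (c1*a1 + c2*a2)" "int y = int (d1*a1 + d2*a2 + b*c2)"
          unfolding MN_iff by blast
        from e(1) have "x = c1*a1 + c2*a2" by (simp only: of_nat_eq_iff)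
        hence "c1*a1 + c2*a2 = a2*(a1-1) + a1*(nat u)" unfolding x_def by simp
        from forced[OF assms(1,3) this] obtain j where j: "c2 = (a1-1) + a1*j" by blast
        from e(2) have "y = d1*a1 + d2*a2 + b*c2" by (simp only: of_nat_eq_iff)
        hence "C - 1 + B = d1*a1 + d2*a2 + (B + b*a1*j)" unfolding y_def j B_def
          by (simp add: algebra_simps)
        hence "C - 1 = (d1 + b*j)*a1 + d2*a2" by (simp add: algebra_simps)
        hence "rep a1 a2 (C - 1)" by (auto simp: rep_def)
        thus False using chi_min[OF assms] False unfolding C_def by simp
      qed
    qed
    thus "fst w \<ge> int C \<and> snd w \<ge> int C + int B" using Cu uv \<open>u \<ge> 0\<close> by auto
  next
    assume a: "fst w \<ge> int C \<and> snd w \<ge> int C + int B"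
    show "w \<in> Frob (int a1, 0) (int a2, int b)"
      unfolding Frob_iff
    proof (intro allI impI)
      fix p q :: int
      assume pq: "p \<ge> 0" "q \<ge> 0"
      define n1 where "n1 = nat (fst w + p - int C)"
      define n2 where "n2 = nat (snd w + q - int C - int B)"
      have x: "fst w + p = int (C + n1)" using a pq unfolding n1_def by simp
      have y: "snd w + q = int (C + B + n2)" using a pq unfolding n2_def by simp
      from rep_reduce[OF assms(1) chi_prop[OF assms, of n1]] obtain c1 c2 where
        c: "C + n1 = c1*a1 + c2*a2" "c2 < a1" unfolding C_def by blast
      have "c2 \<le> a1 - 1" using c(2) by simp
      hence "b*c2 \<le> B" unfolding B_def by (rule mult_le_mono2)
      hence "C + B + n2 = C + (B - b*c2 + n2) + b*c2" by simp
      moreover obtain d1 d2 where "C + (B - b*c2 + n2) = d1*a1 + d2*a2"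
        using chi_prop[OF assms] unfolding C_def rep_def by blast
      ultimately have "C + B + n2 = d1*a1 + d2*a2 + b*c2" by simp
      thus "(fst w + p, snd w + q) \<in> MN (int a1, 0) (int a2, int b)"
        unfolding x y MN_iff using c(1) by metis
    qed
  qed
  show ?thesis
  proof (rule set_eqI)
    fix w
    show "w \<in> Frob (int a1, 0) (int a2, int b) \<longleftrightarrow>
      w \<in> (\<lambda>v. Radd (int (chi a1 a2), int (chi a1 a2) + int b * (int a1 - 1)) v) ` Nsq"
      unfolding img_iff main[of w] using B unfolding C_def by simp
  qed
qed

end
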